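(* Let $V=[n]$, let $\mathbb V=\{V_1,\dots,V_k\}$ be a partition of $V$ into nonempty classes, let $d:\mathbb V\to\mathbb N$, and let $D^*=(d_{ij})$ be a symmetric $k\times k$ matrix with entries in $\mathbb N\cup\{*\}$. If $\langle\mathbb V,d,D^*\rangle\neq\emptyset$, then there exists a balanced $\langle\mathbb V,d,D^*\rangle$ graph.
   Context: $\mathbb N$ denotes the nonnegative integers. $\langle\mathbb V,d,D^*\rangle$ is the set of simple graphs $G$ on $V$ such that every vertex of $V_i$ has degree $d(V_i)$, and for every pair $i\le j$ with $d_{ij}\neq *$, the number of edges of $G$ between $V_i$ and $V_j$ (with both endpoints in $V_i$ if $i=j$) is exactly $d_{ij}$; pairs with $d_{ij}=*$ are unconstrained. For $G\in\langle\mathbb V,d,D^*\rangle$ let $H$ be the spanning subgraph of $G$ consisting of the edges $uv$ of $G$ with $u\in V_i$, $v\in V_j$ and $d_{ij}\neq *$. $G$ is a balanced $\langle\mathbb V,d,D^*\rangle$ graph if $H$ satisfies the balanced degree invariant: for every $i$, $\max_{v\in V_i}\deg_H(v)-\min_{v\in V_i}\deg_H(v)\le 1$. *)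

theory Defs
  imports Main
begin

text \<open>The partition into classes V_0,...,V_(k-1) is
given by a class map cls: vertex v lies in class cls v (< k). d i is the degree
prescribed for class i. D i j = None encodes *, D i j = Some m the exact count m.\<close>

definition cls_set :: "nat \<Rightarrow> (nat \<Rightarrow> nat) \<Rightarrow> nat \<Rightarrow> nat set" where
  "cls_set n cls i = {v \<in> {1..n}. cls v = i}"

definition is_partition :: "nat \<Rightarrow> nat \<Rightarrow> (nat \<Rightarrow> nat) \<Rightarrow> bool" where
  "is_partition n k cls \<longleftrightarrow> (\<forall>v\<in>{1..n}. cls v < k) \<and> (\<forall>i<k. cls_set n cls i \<noteq> {})"

definition simple_graph_on :: "nat set \<Rightarrow> nat set set \<Rightarrow> bool" where
  "simple_graph_on V E \<longleftrightarrow> (\<forall>e\<in>E. e \<subseteq> V \<and> card e = 2)"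

definition deg :: "nat set set \<Rightarrow> nat \<Rightarrow> nat" where
  "deg E v = card {e \<in> E. v \<in> e}"

definition edges_between :: "(nat \<Rightarrow> nat) \<Rightarrow> nat set set \<Rightarrow> nat \<Rightarrow> nat \<Rightarrow> nat set set" where
  "edges_between cls E i j = {e \<in> E. \<exists>u v. e = {u, v} \<and> u \<noteq> v \<and> cls u = i \<and> cls v = j}"

definition in_VdD :: "nat \<Rightarrow> nat \<Rightarrow> (nat \<Rightarrow> nat) \<Rightarrow> (nat \<Rightarrow> nat) \<Rightarrow> (nat \<Rightarrow> nat \<Rightarrow> nat option)
    \<Rightarrow> nat set set \<Rightarrow> bool" where
  "in_VdD n k cls d D E \<longleftrightarrow> simple_graph_on {1..n} E
     \<and> (\<forall>v\<in>{1..n}. deg E v = d (cls v))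
     \<and> (\<forall>i<k. \<forall>j<k. i \<le> j \<longrightarrow> (\<forall>m. D i j = Some m \<longrightarrow> card (edges_between cls E i j) = m))"

definition constrained_part :: "(nat \<Rightarrow> nat) \<Rightarrow> (nat \<Rightarrow> nat \<Rightarrow> nat option) \<Rightarrow> nat set set \<Rightarrow> nat set set" where
  "constrained_part cls D E = {e \<in> E. \<exists>u v. e = {u, v} \<and> D (cls u) (cls v) \<noteq> None}"

definition balanced_VdD :: "nat \<Rightarrow> nat \<Rightarrow> (nat \<Rightarrow> nat) \<Rightarrow> (nat \<Rightarrow> nat) \<Rightarrow> (nat \<Rightarrow> nat \<Rightarrow> nat option)
    \<Rightarrow> nat set set \<Rightarrow> bool" where
  "balanced_VdD n k cls d D E \<longleftrightarrow> in_VdD n k cls d D E \<and>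
     (\<forall>i<k. Max (deg (constrained_part cls D E) ` cls_set n cls i)
            - Min (deg (constrained_part cls D E) ` cls_set n cls i) \<le> 1)"

end

theory Submission
  imports Defs
begin

definition Qe :: "(nat \<Rightarrow> nat) \<Rightarrow> (nat \<Rightarrow> nat \<Rightarrow> nat option) \<Rightarrow> nat set \<Rightarrow> bool" where
  "Qe cls D e = (\<exists>u v. e = {u, v} \<and> D (cls u) (cls v) \<noteq> None)"

lemma cp_eq: "constrained_part cls D E = {e \<in> E. Qe cls D e}"
  unfolding constrained_part_def Qe_def by simp

lemma degH_eq: "deg (constrained_part cls D E) v = card {e \<in> E. Qe cls D e \<and> v \<in> e}"
  unfolding deg_def cp_eq by (rule arg_cong[where f=card]) auto

lemma swap_count:
  assumes "finite E" "e1 \<in> E" "e2 \<in> E" "e1 \<noteq> e2" "f1 \<notin> E" "f2 \<notin> E" "f1 \<noteq> f2"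
  shows "card {e \<in> (E - {e1, e2}) \<union> {f1, f2}. P e} + (if P e1 then 1 else 0) + (if P e2 then 1 else 0)
       = card {e \<in> E. P e} + (if P f1 then 1 else 0) + (if P f2 then 1 else 0)"
proof -
  let ?A = "{e \<in> E. P e}"
  have fA: "finite ?A" using assms(1) by simp
  have eq: "{e \<in> (E - {e1, e2}) \<union> {f1, f2}. P e} = (?A - {e1, e2}) \<union> {f \<in> {f1, f2}. P f}" by auto
  have disj: "(?A - {e1, e2}) \<inter> {f \<in> {f1, f2}. P f} = {}" using assms by auto
  have c1: "card {e \<in> (E - {e1, e2}) \<union> {f1, f2}. P e} = card (?A - {e1, e2}) + card {f \<in> {f1, f2}. P f}"
    unfolding eq using disj fA by (simp add: card_Un_disjoint)
  have c2: "card {f \<in> {f1, f2}. P f} = (if P f1 then 1 else 0) + (if P f2 then 1 else 0)"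
  proof -
    have "{f \<in> {f1, f2}. P f} = (if P f1 then {f1} else {}) \<union> (if P f2 then {f2} else {})" by auto
    then show ?thesis using assms(7) by (cases "P f1"; cases "P f2") auto
  qed
  have c3: "card (?A - {e1, e2}) + (if P e1 then 1 else 0) + (if P e2 then 1 else 0) = card ?A"
  proof -
    have "card (?A - {e1, e2}) + card (?A \<inter> {e1, e2}) = card ?A"
      using card_Int_Diff[OF fA, of "{e1, e2}"] by simp
    moreover have "card (?A \<inter> {e1, e2}) = (if P e1 then 1 else 0) + (if P e2 then 1 else 0)"
      using assms(2,3,4) by auto
    ultimately show ?thesis by simp
  qed
  show ?thesis using c1 c2 c3 by simp
qed

lemma nbr_card:
  assumes "simple_graph_on V E"
  shows "card {e \<in> E. R e \<and> u \<in> e} = card {x. {u, x} \<in> E \<and> R {u, x}}"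
proof -
  have "bij_betw (\<lambda>x. {u, x}) {x. {u, x} \<in> E \<and> R {u, x}} {e \<in> E. R e \<and> u \<in> e}"
  proof (rule bij_betwI')
    fix x y assume x: "x \<in> {x. {u, x} \<in> E \<and> R {u, x}}" and y: "y \<in> {x. {u, x} \<in> E \<and> R {u, x}}"
    have "card {u, x} = 2" "card {u, y} = 2" using x y assms unfolding simple_graph_on_def by auto
    hence "x \<noteq> u" "y \<noteq> u" by auto
    then show "({u, x} = {u, y}) = (x = y)" by (auto simp: doubleton_eq_iff)
  next
    fix x assume "x \<in> {x. {u, x} \<in> E \<and> R {u, x}}"
    then show "{u, x} \<in> {e \<in> E. R e \<and> u \<in> e}" by auto
  next
    fix e assume e: "e \<in> {e \<in> E. R e \<and> u \<in> e}"
    then have "card e = 2" using assms unfolding simple_graph_on_def by auto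
    then obtain a b where ab: "e = {a, b}" "a \<noteq> b" by (auto simp: card_2_iff)
    show "\<exists>x\<in>{x. {u, x} \<in> E \<and> R {u, x}}. e = {u, x}"
    proof (cases "u = a")
      case True then show ?thesis using e ab by (intro bexI[of _ b]) auto
    next
      case False then have "u = b" using e ab by auto
      then show ?thesis using e ab by (intro bexI[of _ a]) (auto simp: insert_commute)
    qed
  qed
  then show ?thesis by (simp add: bij_betw_same_card)
qed

lemma qlem:
  assumes "\<forall>i<k. \<forall>j<k. D i j = D j i" "cls a < k" "cls b < k"
  shows "Qe cls D {a, b} \<longleftrightarrow> D (cls a) (cls b) \<noteq> None"
  using assms unfolding Qe_def by (auto simp: doubleton_eq_iff)

lemma eblem:
  assumes "a \<noteq> b"
  shows "(\<exists>p q. {a, b} = {p, q} \<and> p \<noteq> q \<and> cls p = i \<and> cls q = j)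
      \<longleftrightarrow> (cls a = i \<and> cls b = j \<or> cls b = i \<and> cls a = j)"
  using assms by (auto simp: doubleton_eq_iff)

definition Phi :: "nat \<Rightarrow> (nat \<Rightarrow> nat) \<Rightarrow> (nat \<Rightarrow> nat \<Rightarrow> nat option) \<Rightarrow> nat set set \<Rightarrow> nat" where
  "Phi n cls D E = (\<Sum>v\<in>{1..n}. (deg (constrained_part cls D E) v)^2)"

lemma improve:
  assumes part: "is_partition n k cls"
    and sym: "\<forall>i<k. \<forall>j<k. D i j = D j i"
    and G: "in_VdD n k cls d D E"
    and uw: "u \<in> cls_set n cls i" "w \<in> cls_set n cls i"
    and gap: "deg (constrained_part cls D E) w + 2 \<le> deg (constrained_part cls D E) u"
  shows "\<exists>E'. in_VdD n k cls d D E' \<and> Phi n cls D E' < Phi n cls D E"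
proof -
  let ?V = "{1..n::nat}"
  let ?Q = "Qe cls D"
  have sg: "simple_graph_on ?V E" and degE: "\<forall>v\<in>?V. deg E v = d (cls v)"
    and cnt: "\<forall>i<k. \<forall>j<k. i \<le> j \<longrightarrow> (\<forall>m. D i j = Some m \<longrightarrow> card (edges_between cls E i j) = m)"
    using G unfolding in_VdD_def by auto
  have clsk: "\<And>v. v \<in> ?V \<Longrightarrow> cls v < k" using part unfolding is_partition_def by auto
  have uV: "u \<in> ?V" and wV: "w \<in> ?V" and cu: "cls u = i" and cw: "cls w = i"
    using uw unfolding cls_set_def by auto
  have Esub: "\<And>e. e \<in> E \<Longrightarrow> e \<subseteq> ?V" and Ec2: "\<And>e. e \<in> E \<Longrightarrow> card e = 2"
    using sg unfolding simple_graph_on_def by auto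
  have finE: "finite E"
  proof -
    have "E \<subseteq> Pow ?V" using Esub by auto
    then show ?thesis by (rule finite_subset) simp
  qed
  have nbV: "\<And>a b. {a, b} \<in> E \<Longrightarrow> a \<in> ?V \<and> b \<in> ?V" using Esub by blast
  have nbne: "\<And>a b. {a, b} \<in> E \<Longrightarrow> a \<noteq> b" using Ec2 by fastforce
  define NH where "NH v = {x. {v, x} \<in> E \<and> ?Q {v, x}}" for v
  define NS where "NS v = {x. {v, x} \<in> E \<and> \<not> ?Q {v, x}}" for v
  have finNH: "finite (NH v)" for v
    by (rule finite_subset[of _ ?V]) (auto simp: NH_def dest: nbV)
  have finNS: "finite (NS v)" for v
    by (rule finite_subset[of _ ?V]) (auto simp: NS_def dest: nbV)
  have dH: "deg (constrained_part cls D E) v = card (NH v)" for v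
    unfolding degH_eq NH_def by (rule nbr_card[OF sg])
  have dE: "deg E v = card (NH v) + card (NS v)" for v
  proof -
    have "deg E v = card {e \<in> E. True \<and> v \<in> e}" unfolding deg_def by simp
    also have "\<dots> = card {x. {v, x} \<in> E \<and> True}" by (rule nbr_card[OF sg])
    also have "{x. {v, x} \<in> E \<and> True} = NH v \<union> NS v" unfolding NH_def NS_def by auto
    also have "card (NH v \<union> NS v) = card (NH v) + card (NS v)"
      by (rule card_Un_disjoint[OF finNH finNS]) (auto simp: NH_def NS_def)
    finally show ?thesis .
  qed
  have same: "card (NH u) + card (NS u) = card (NH w) + card (NS w)"
    using dE degE uV wV cu cw by metis
  have gap': "card (NH w) + 2 \<le> card (NH u)" using gap dH by simp
  obtain x where x: "x \<in> NH u" "x \<noteq> w" "x \<notin> NH w"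
  proof (rule ccontr)
    assume "\<not> thesis"
    with that have "NH u \<subseteq> insert w (NH w)" by blast
    then have "card (NH u) \<le> card (insert w (NH w))" by (rule card_mono[OF finite_insert[THEN iffD2, OF finNH]])
    also have "\<dots> \<le> Suc (card (NH w))" by (simp add: card_insert_if finNH)
    finally show False using gap' by simp
  qed
  obtain y where y: "y \<in> NS w" "y \<noteq> u" "y \<notin> NS u"
  proof (rule ccontr)
    assume "\<not> thesis"
    with that have "NS w \<subseteq> insert u (NS u)" by blast
    then have "card (NS w) \<le> card (insert u (NS u))" by (rule card_mono[OF finite_insert[THEN iffD2, OF finNS]])
    also have "\<dots> \<le> Suc (card (NS u))" by (simp add: card_insert_if finNS)
    finally show False using gap' same by simp
  qed
  have ux: "{u, x} \<in> E" "?Q {u, x}" using x(1) unfolding NH_def by auto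
  have wy: "{w, y} \<in> E" "\<not> ?Q {w, y}" using y(1) unfolding NS_def by auto
  have xV: "x \<in> ?V" and yV: "y \<in> ?V" using nbV ux(1) wy(1) by auto
  have Qwx: "?Q {w, x}" using ux(2) qlem[where cls=cls and a=u and b=x, OF sym clsk[OF uV] clsk[OF xV]] qlem[where cls=cls and a=w and b=x, OF sym clsk[OF wV] clsk[OF xV]] cu cw by simp
  have nQuy: "\<not> ?Q {u, y}" using wy(2) qlem[where cls=cls and a=u and b=y, OF sym clsk[OF uV] clsk[OF yV]] qlem[where cls=cls and a=w and b=y, OF sym clsk[OF wV] clsk[OF yV]] cu cw by simp
  have wx: "{w, x} \<notin> E" using x(3) Qwx unfolding NH_def by auto
  have uy: "{u, y} \<notin> E" using y(3) nQuy unfolding NS_def by auto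
  have uw_ne: "u \<noteq> w" using gap by auto
  have xu: "x \<noteq> u" using nbne ux(1) by auto
  have yw: "y \<noteq> w" using nbne wy(1) by auto
  have xy: "x \<noteq> y" using ux(2) nQuy by auto
  define E' where "E' = (E - {{u, x}, {w, y}}) \<union> {{w, x}, {u, y}}"
  have ne1: "{u, x} \<noteq> {w, y}" using uw_ne y(2) by (auto simp: doubleton_eq_iff)
  have ne2: "{w, x} \<noteq> {u, y}" using uw_ne yw by (auto simp: doubleton_eq_iff)
  note SC = swap_count[OF finE ux(1) wy(1) ne1 wx uy ne2, folded E'_def]
  have sg': "simple_graph_on ?V E'"
    unfolding simple_graph_on_def E'_def using sg xV yV uV wV x(2) y(2)
    unfolding simple_graph_on_def by auto
  have degE': "deg E' v = deg E v" for v
  proof -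
    have "card {e \<in> E'. v \<in> e} = card {e \<in> E. v \<in> e}"
      using SC[of "\<lambda>e. v \<in> e"] xu yw x(2) y(2) by (auto split: if_splits)
    then show ?thesis unfolding deg_def .
  qed
  have eb: "card (edges_between cls E' a b) = card (edges_between cls E a b)" for a b
  proof -
    let ?P = "\<lambda>e. \<exists>p q. e = {p, q} \<and> p \<noteq> q \<and> cls p = a \<and> cls q = b"
    have "?P {u, x} = ?P {w, x}" using eblem[OF xu[symmetric], of cls a b] eblem[of w x cls a b] x(2) cu cw
      by (simp add: insert_commute)
    moreover have "?P {w, y} = ?P {u, y}" using eblem[OF yw[symmetric], of cls a b] eblem[of u y cls a b] y(2) cu cw
      by (simp add: insert_commute)
    ultimately have "card {e \<in> E'. ?P e} = card {e \<in> E. ?P e}"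
      using SC[of ?P] by (auto split: if_splits)
    then show ?thesis unfolding edges_between_def .
  qed
  have inE': "in_VdD n k cls d D E'"
    unfolding in_VdD_def using sg' degE degE' cnt eb by simp
  let ?h = "\<lambda>F v. deg (constrained_part cls D F) v"
  have hE': "?h E' v + (if ?Q {u, x} \<and> v \<in> {u, x} then 1 else 0) + (if ?Q {w, y} \<and> v \<in> {w, y} then 1 else 0)
      = ?h E v + (if ?Q {w, x} \<and> v \<in> {w, x} then 1 else 0) + (if ?Q {u, y} \<and> v \<in> {u, y} then 1 else 0)" for v
    unfolding degH_eq using SC[of "\<lambda>e. ?Q e \<and> v \<in> e"] by simp
  have hu: "?h E' u + 1 = ?h E u" using hE'[of u] ux(2) wy(2) Qwx nQuy uw_ne xu[symmetric] by simp
  have hw: "?h E' w = ?h E w + 1" using hE'[of w] ux(2) wy(2) Qwx nQuy uw_ne x(2)[symmetric] by simp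
  have ho: "?h E' v = ?h E v" if "v \<noteq> u" "v \<noteq> w" for v
    using hE'[of v] ux(2) wy(2) Qwx nQuy that by auto
  have fV: "finite ?V" by simp
  have split: "Phi n cls D F = (\<Sum>v\<in>?V - {u} - {w}. (?h F v)^2) + (?h F w)^2 + (?h F u)^2" for F
  proof -
    have "Phi n cls D F = (?h F u)^2 + (\<Sum>v\<in>?V - {u}. (?h F v)^2)"
      unfolding Phi_def using sum.remove[OF fV uV] by blast
    also have "(\<Sum>v\<in>?V - {u}. (?h F v)^2) = (?h F w)^2 + (\<Sum>v\<in>?V - {u} - {w}. (?h F v)^2)"
      using sum.remove[of "?V - {u}" w] wV uw_ne by auto
    finally show ?thesis by simp
  qed
  have rest: "(\<Sum>v\<in>?V - {u} - {w}. (?h E' v)^2) = (\<Sum>v\<in>?V - {u} - {w}. (?h E v)^2)"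
    by (rule sum.cong) (auto simp: ho)
  obtain a where a: "?h E u = a + 1" using hu by (metis add.commute)
  have ha: "?h E' u = a" using hu a by simp
  have "?h E w + 1 \<le> a" using gap a by simp
  then have "a^2 + (?h E w + 1)^2 < (a+1)^2 + (?h E w)^2"
    by (simp add: power2_eq_square algebra_simps)
  then have "Phi n cls D E' < Phi n cls D E"
    unfolding split[of E'] split[of E] rest hw ha a by simp
  then show ?thesis using inE' by blast
qed

theorem lemma1:
  fixes n k :: nat and cls d :: "nat \<Rightarrow> nat" and D :: "nat \<Rightarrow> nat \<Rightarrow> nat option"
  assumes "is_partition n k cls"
    and "\<forall>i<k. \<forall>j<k. D i j = D j i"
    and "\<exists>G. in_VdD n k cls d D G"
  shows "\<exists>G. balanced_VdD n k cls d D G"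
proof -
  have main: "\<forall>G. in_VdD n k cls d D G \<longrightarrow> Phi n cls D G = m \<longrightarrow> (\<exists>G. balanced_VdD n k cls d D G)" for m
  proof (induction m rule: less_induct)
    case (less m)
    show ?case
    proof (intro allI impI)
      fix G assume G: "in_VdD n k cls d D G" and m: "Phi n cls D G = m"
      show "\<exists>G. balanced_VdD n k cls d D G"
      proof (cases "balanced_VdD n k cls d D G")
        case True then show ?thesis by blast
      next
        case False
        let ?h = "deg (constrained_part cls D G)"
        obtain i where i: "i < k" and gap: "Max (?h ` cls_set n cls i) - Min (?h ` cls_set n cls i) > 1"
          using False G unfolding balanced_VdD_def by (auto simp: not_le)
        have ne: "cls_set n cls i \<noteq> {}" using assms(1) i unfolding is_partition_def by auto
        have fin: "finite (cls_set n cls i)" unfolding cls_set_def by simp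
        have "Max (?h ` cls_set n cls i) \<in> ?h ` cls_set n cls i" using ne fin by (intro Max_in) auto
        then obtain u where u: "u \<in> cls_set n cls i" "?h u = Max (?h ` cls_set n cls i)" by auto
        have "Min (?h ` cls_set n cls i) \<in> ?h ` cls_set n cls i" using ne fin by (intro Min_in) auto
        then obtain w where w: "w \<in> cls_set n cls i" "?h w = Min (?h ` cls_set n cls i)" by auto
        have "?h w + 2 \<le> ?h u" using u w gap by simp
        then obtain E' where E': "in_VdD n k cls d D E'" "Phi n cls D E' < Phi n cls D G"
          using improve[OF assms(1,2) G u(1) w(1)] by blast
        then show ?thesis using less.IH m by blast
      qed
    qed
  qed
  then show ?thesis using assms(3) by blast
qed

end
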